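(* There is a constant $C<\infty$ such that for all $n\ge1$ and all $f:\{0,1\}^n\to\mathbb{R}$, $\|R_0f\|_2\le C\|f\|_2$ and $\|R_1f\|_2\le C\|f\|_2$, where $(R_0f)(x)=\Big(\frac12\sum_{k=1}^{r_0}k\,[((S_{2k}-S_{2(k-1)})f)(x)]^2\Big)^{1/2}$ with $r_0=\lfloor\lfloor n/2\rfloor/2\rfloor$, and $(R_1f)(x)=\Big(\frac12\sum_{k=1}^{r_1}k\,[((S_{2k+1}-S_{2k-1})f)(x)]^2\Big)^{1/2}$ with $r_1=\lfloor(\lfloor n/2\rfloor-1)/2\rfloor$.
   Context: Let $\mathbb{I}^n=\{0,1\}^n$ with Hamming distance $d$, and $\|f\|_2=(\sum_x f(x)^2)^{1/2}$. For $0\le k\le n$, the spherical mean is $(S_kf)(x)=\binom nk^{-1}\sum_{y:\,d(x,y)=k}f(y)$. *)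

theory Defs
  imports "HOL-Analysis.Analysis"
begin

text \<open>The discrete cube {0,1}^n is represented by the subsets of {..<n}
  (a point is identified with its support). Hamming distance is the
  cardinality of the symmetric difference.\<close>

definition cube :: "nat \<Rightarrow> nat set set" where
  "cube n = Pow {..<n}"

definition hamming :: "nat set \<Rightarrow> nat set \<Rightarrow> nat" where
  "hamming x y = card ((x - y) \<union> (y - x))"

definition l2norm :: "nat \<Rightarrow> (nat set \<Rightarrow> real) \<Rightarrow> real" where
  "l2norm n f = sqrt (\<Sum>x\<in>cube n. (f x)^2)"

definition sph_mean :: "nat \<Rightarrow> nat \<Rightarrow> (nat set \<Rightarrow> real) \<Rightarrow> nat set \<Rightarrow> real" where
  "sph_mean n k f x = (\<Sum>y\<in>{y\<in>cube n. hamming x y = k}. f y) / real (n choose k)"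

definition R0 :: "nat \<Rightarrow> (nat set \<Rightarrow> real) \<Rightarrow> nat set \<Rightarrow> real" where
  "R0 n f x = sqrt ((1/2) * (\<Sum>k=1..(n div 2) div 2.
      real k * (sph_mean n (2*k) f x - sph_mean n (2*(k-1)) f x)^2))"

definition R1 :: "nat \<Rightarrow> (nat set \<Rightarrow> real) \<Rightarrow> nat set \<Rightarrow> real" where
  "R1 n f x = sqrt ((1/2) * (\<Sum>k=1..(n div 2 - 1) div 2.
      real k * (sph_mean n (2*k+1) f x - sph_mean n (2*k-1) f x)^2))"

end

theory Submission
  imports Defs
begin


definition FF :: "(nat \<Rightarrow> real) \<Rightarrow> real \<Rightarrow> nat \<Rightarrow> real" where
  "FF e \<mu> m = (e m)^2 + (e (Suc m))^2 - 2*\<mu>*e m*e (Suc m)"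

lemma FF_lower: assumes "\<bar>\<mu>\<bar> \<le> 1"
  shows "(1 - \<bar>\<mu>\<bar>) * ((e m)^2 + (e (Suc m))^2) \<le> FF e \<mu> m"
proof -
  have "\<bar>\<mu>\<bar> * (\<bar>e m\<bar> - \<bar>e (Suc m)\<bar>)^2 \<ge> 0" by simp
  moreover have "2*\<mu>*e m*e (Suc m) \<le> 2*\<bar>\<mu>\<bar>*\<bar>e m\<bar>*\<bar>e (Suc m)\<bar>"
    by (metis abs_ge_self abs_mult mult.assoc mult_left_mono zero_le_numeral)
  ultimately show ?thesis unfolding FF_def
    by (simp add: power2_eq_square algebra_simps)
qed

lemma FF_nonneg: assumes "\<bar>\<mu>\<bar> \<le> 1" shows "0 \<le> FF e \<mu> m"
proof -
  have "0 \<le> (1 - \<bar>\<mu>\<bar>) * ((e m)^2 + (e (Suc m))^2)" using assms by simp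
  with FF_lower[OF assms, of e m] show ?thesis by linarith
qed

lemma sq_le_of_scaled: fixes u d a b :: real
  assumes "a * d = b * u" "0 < a" "a \<le> b" shows "u^2 \<le> d^2"
proof -
  have "u = (a/b) * d" using assms by (simp add: field_simps)
  hence "u^2 = (a/b)^2 * d^2" by (metis power_mult_distrib)
  moreover have "(a/b)^2 \<le> 1" using assms by (simp add: power_le_one)
  ultimately show ?thesis by (simp add: mult_left_le_one_le)
qed

lemma uw_bound: fixes a b \<mu> :: real assumes "\<bar>\<mu>\<bar> \<le> 1"
  shows "(1 - \<bar>\<mu>\<bar>) * (a^2 + b^2 - 2*\<mu>*a*b) \<le> (b - \<mu>*a)^2 + (\<mu>*b - a)^2"
proof -
  define t where "t = \<bar>\<mu>\<bar>"
  have t0: "t \<ge> 0" unfolding t_def by simp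
  have tt: "t^2 = \<mu>^2" unfolding t_def by simp
  have h1: "\<mu>*(a*b) \<le> t*(\<bar>a\<bar>*\<bar>b\<bar>)" unfolding t_def
    by (metis abs_ge_self abs_mult)
  have h3: "(1+t)*(\<mu>*(a*b)) \<le> (1+t)*(t*(\<bar>a\<bar>*\<bar>b\<bar>))"
    using h1 t0 by (intro mult_left_mono) auto
  have E2: "t*(1+t)*(a^2+b^2) - (1+t)*(2*(t*(\<bar>a\<bar>*\<bar>b\<bar>))) = t*(1+t)*(\<bar>a\<bar>-\<bar>b\<bar>)^2"
    by (simp add: power2_diff algebra_simps)
  have E2': "t*(1+t)*(\<bar>a\<bar>-\<bar>b\<bar>)^2 \<ge> 0" using t0 by simp
  have E1: "(b - \<mu>*a)^2 + (\<mu>*b - a)^2 - (1 - t) * (a^2 + b^2 - 2*\<mu>*a*b)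
      = t*(1+t)*(a^2+b^2) - (1+t)*(2*(\<mu>*(a*b)))"
    using tt by (simp add: power2_eq_square algebra_simps)
  show ?thesis using E1 E2 E2' h3 unfolding t_def[symmetric] by linarith
qed

lemma tele1: fixes F :: "nat \<Rightarrow> real"
  assumes "\<And>m. 1 \<le> m \<Longrightarrow> m \<le> T \<Longrightarrow> \<delta>*F m \<le> F(m-1) - F(Suc m)"
  shows "\<delta>*(\<Sum>m\<in>{1..T}. F m) \<le> F 0 + F 1 - F T - F (Suc T)"
  using assms
proof (induction T)
  case 0 then show ?case by simp
next
  case (Suc T)
  have "\<delta>*(\<Sum>m\<in>{1..Suc T}. F m) = \<delta>*(\<Sum>m\<in>{1..T}. F m) + \<delta>*F (Suc T)"
    by (simp add: algebra_simps)
  also have "\<dots> \<le> F 0 + F 1 - F T - F (Suc T) + (F T - F (Suc (Suc T)))"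
    using Suc.IH Suc.prems[of "Suc T"] Suc.prems by force
  finally show ?case by simp
qed

lemma tele2: fixes F :: "nat \<Rightarrow> real"
  assumes "\<And>m. 1 \<le> m \<Longrightarrow> m \<le> T \<Longrightarrow> \<delta>*F m \<le> F(m-1) - F(Suc m)"
  shows "\<delta>*(\<Sum>m\<in>{1..T}. real m * F m) \<le> 2*(\<Sum>i<T. F i) - F 0 - (real T - 1)*F T - real T * F (Suc T)"
  using assms
proof (induction T)
  case 0 then show ?case by simp
next
  case (Suc T)
  have "\<delta>*(\<Sum>m\<in>{1..Suc T}. real m * F m) = \<delta>*(\<Sum>m\<in>{1..T}. real m * F m) + real (Suc T) * (\<delta>*F (Suc T))"
    by (simp add: algebra_simps)
  also have "real (Suc T) * (\<delta>*F (Suc T)) \<le> real (Suc T) * (F T - F (Suc (Suc T)))"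
    using Suc.prems[of "Suc T"] by (intro mult_left_mono) auto
  finally show ?case using Suc.IH Suc.prems by (simp add: algebra_simps)
qed

lemma sum_Icc_real: "(\<Sum>m\<in>{1..T}. real m) = real T * (real T + 1) / 2"
  by (induction T) (auto simp: field_simps)

lemma main_sum: fixes F :: "nat \<Rightarrow> real"
  assumes nn: "\<And>m. 0 \<le> F m"
  and mono: "\<And>i m. i \<le> m \<Longrightarrow> 2*m \<le> N \<Longrightarrow> F m \<le> F i"
  and contr: "\<And>m. 1 \<le> m \<Longrightarrow> 4*(m+1) \<le> N \<Longrightarrow> \<delta>*F m \<le> F(m-1) - F(Suc m)"
  and d: "0 < \<delta>" "\<delta> \<le> 1" and L: "2*L \<le> N"
  shows "(\<Sum>m\<le>L. real (m+1) * F m) \<le> 201 * F 0 / \<delta>^2"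
proof -
  have d2: "0 < \<delta>^2" "\<delta>^2 \<le> 1" using d by (auto simp: power_le_one)
  have F0d: "F 0 \<le> F 0 / \<delta>^2" using d2 nn[of 0]
    by (simp add: le_divide_eq mult_right_le_one_le)
  have F0d1: "F 0 / \<delta> \<le> F 0 / \<delta>^2" using d nn[of 0]
    by (simp add: power2_eq_square divide_le_eq field_simps mult_left_le_one_le)
  show ?thesis
  proof (cases "N < 16")
    case True
    have "(\<Sum>m\<le>L. real (m+1) * F m) \<le> (\<Sum>m\<le>L. real (L+1) * F 0)"
    proof (rule sum_mono)
      fix m assume "m \<in> {..L}"
      then have "m \<le> L" by simp
      then have "F m \<le> F 0" "real (m+1) \<le> real (L+1)" using mono[of 0 m] L by auto
      then show "real (m+1) * F m \<le> real (L+1) * F 0" using nn[of m]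
        by (meson mult_mono of_nat_0_le_iff order_trans nn)
    qed
    also have "\<dots> = real (L+1) * real (L+1) * F 0" by simp
    also have "\<dots> \<le> 64 * F 0"
    proof -
      have "L + 1 \<le> 8" using True L by linarith
      then have "real (L+1) \<le> real (8::nat)" by (simp only: of_nat_le_iff)
      then have "real (L+1) \<le> 8" by simp
      then have "real (L+1) * real (L+1) \<le> 64" using mult_mono[of "real (L+1)" 8 "real (L+1)" 8] by simp
      then show ?thesis using nn[of 0] by (intro mult_right_mono) auto
    qed
    also have "\<dots> \<le> 201 * F 0 / \<delta>^2" using F0d nn[of 0] by simp
    finally show ?thesis .
  next
    case False
    define T where "T = N div 4 - 1"
    have T3: "3 \<le> T" and T4: "4*(T+1) \<le> N" and TN: "N < 4*(T+2)" using False unfolding T_def by auto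
    have cT: "\<And>m. 1 \<le> m \<Longrightarrow> m \<le> T \<Longrightarrow> \<delta>*F m \<le> F(m-1) - F(Suc m)"
      using contr T4 by auto
    define A where "A = (\<Sum>m\<in>{1..T}. F m)"
    define B where "B = (\<Sum>m\<in>{1..T}. real m * F m)"
    have F1: "F 1 \<le> F 0" using mono[of 0 1] T4 by simp
    have "\<delta>*A \<le> 2 * F 0" using tele1[of T \<delta> F, OF cT] F1 nn[of T] nn[of "Suc T"] unfolding A_def by linarith
    hence Ab: "A \<le> 2 * F 0 / \<delta>" using d by (simp add: le_divide_eq mult.commute)
    have "(\<Sum>i<T. F i) \<le> (\<Sum>i\<in>insert 0 {1..T}. F i)"
      by (rule sum_mono2) (auto simp: nn)
    also have "\<dots> = F 0 + A" unfolding A_def by simp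
    finally have SA: "(\<Sum>i<T. F i) \<le> F 0 + A" .
    have "0 \<le> (real T - 1) * F T" using T3 nn[of T] by simp
    hence "\<delta>*B \<le> 2*(F 0 + A)" using tele2[of T \<delta> F, OF cT] SA nn[of 0] nn[of "Suc T"] unfolding B_def
      by (smt (verit) of_nat_0_le_iff mult_nonneg_nonneg)
    hence "B \<le> 2*(F 0 + A) / \<delta>" using d by (simp add: le_divide_eq mult.commute)
    also have "\<dots> \<le> 2*(F 0 + 2*F 0/\<delta>) / \<delta>" using Ab d by (simp add: divide_right_mono)
    also have "\<dots> = 2*F 0/\<delta> + 4*F 0/\<delta>^2" using d by (simp add: field_simps power2_eq_square)
    also have "\<dots> \<le> 6*F 0/\<delta>^2" using F0d1 by simp
    finally have Bb: "B \<le> 6*F 0/\<delta>^2" .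
    have "F T * (\<Sum>m\<in>{1..T}. real m) = (\<Sum>m\<in>{1..T}. real m * F T)" by (simp add: sum_distrib_left mult.commute)
    also have "\<dots> \<le> B" unfolding B_def
      by (rule sum_mono) (use mono T4 in \<open>auto intro!: mult_left_mono\<close>)
    finally have "F T * (\<Sum>m\<in>{1..T}. real m) \<le> B" .
    hence FTB: "F T * (real T * (real T + 1) / 2) \<le> B" by (simp only: sum_Icc_real)
    have split: "(\<Sum>m\<le>L. real (m+1) * F m) \<le> (\<Sum>m\<le>T. real (m+1) * F m) + (\<Sum>m\<in>{Suc T..L}. real (m+1) * F m)"
    proof -
      have "(\<Sum>m\<le>L. real (m+1) * F m) \<le> (\<Sum>m\<in>{..T} \<union> {Suc T..L}. real (m+1) * F m)"
        by (rule sum_mono2) (auto simp: nn)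
      also have "\<dots> = (\<Sum>m\<le>T. real (m+1) * F m) + (\<Sum>m\<in>{Suc T..L}. real (m+1) * F m)"
        by (rule sum.union_disjoint) auto
      finally show ?thesis .
    qed
    have first: "(\<Sum>m\<le>T. real (m+1) * F m) = B + (F 0 + A)"
    proof -
      have "(\<Sum>m\<le>T. real (m+1) * F m) = (\<Sum>m\<le>T. real m * F m) + (\<Sum>m\<le>T. F m)"
        by (simp add: sum.distrib[symmetric] algebra_simps)
      moreover have "(\<Sum>m\<le>T. real m * F m) = B"
      proof -
        have "{..T} = insert 0 {1..T}" by auto
        then show ?thesis unfolding B_def by simp
      qed
      moreover have "(\<Sum>m\<le>T. F m) = F 0 + A"
      proof -
        have "{..T} = insert 0 {1..T}" by auto
        then show ?thesis unfolding A_def by simp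
      qed
      ultimately show ?thesis by simp
    qed
    have LT: "L + 1 \<le> 4*T" using L TN T3 by presburger
    have "(\<Sum>m\<in>{Suc T..L}. real (m+1) * F m) \<le> (\<Sum>m\<in>{Suc T..L}. real (L+1) * F T)"
    proof (rule sum_mono)
      fix m assume "m \<in> {Suc T..L}"
      then have "T \<le> m" "m \<le> L" by auto
      then have "F m \<le> F T" "real (m+1) \<le> real (L+1)" using mono[of T m] L by auto
      then show "real (m+1) * F m \<le> real (L+1) * F T" using nn
        by (meson mult_mono of_nat_0_le_iff)
    qed
    also have "\<dots> = real (L - T) * (real (L+1) * F T)" by simp
    also have "\<dots> \<le> real (L+1) * (real (L+1) * F T)"
      using nn[of T] by (intro mult_right_mono) auto
    also have "\<dots> \<le> (4*real T) * ((4*real T) * F T)"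
    proof -
      have "real (L+1) \<le> real (4*T)" using LT by (simp only: of_nat_le_iff)
      then have h: "real (L+1) \<le> 4*real T" by simp
      show ?thesis using mult_mono[OF h mult_right_mono[OF h nn[of T]]] nn[of T] by simp
    qed
    also have "\<dots> \<le> 32 * (F T * (real T * (real T + 1) / 2))"
      using nn[of T] by (simp add: algebra_simps mult_right_mono)
    also have "\<dots> \<le> 32 * B" using FTB by simp
    finally have second: "(\<Sum>m\<in>{Suc T..L}. real (m+1) * F m) \<le> 32*B" .
    have "(\<Sum>m\<le>L. real (m+1) * F m) \<le> 33*B + F 0 + A" using split first second by linarith
    also have "\<dots> \<le> 33*(6*F 0/\<delta>^2) + F 0/\<delta>^2 + 2*(F 0/\<delta>^2)"
      using Bb F0d Ab F0d1 by linarith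
    also have "\<dots> = 201 * F 0 / \<delta>^2" by (simp add: field_simps)
    finally show ?thesis .
  qed
qed

lemma alg_const: fixes u w z :: real assumes "u > 0"
  shows "(201*(z*(u*w))/(u^2/4))/u = 804*(z*w)/u^2"
  using assms by (simp add: field_simps power2_eq_square)

lemma sum_atMost_real: "(\<Sum>m\<le>L. real (m+1)) = (real L + 1) * (real L + 2) / 2"
  by (induction L) (auto simp: field_simps)

locale enseq =
  fixes e :: "nat \<Rightarrow> real" and N :: nat and \<mu> :: real
  assumes rec: "\<And>m. 1 \<le> m \<Longrightarrow> m < N \<Longrightarrow>
     (real N - real m) * e (Suc m) + real m * e (m-1) = real N * \<mu> * e m"
  and mu: "\<bar>\<mu>\<bar> \<le> 1"
begin

abbreviation F where "F \<equiv> FF e \<mu>"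

lemma F_step: assumes "1 \<le> m" "m < N"
  shows "F (m-1) - F m = ((real N - 2*real m)/real N) * (e (Suc m) - e (m-1))^2"
proof -
  have r: "(real N - real m) * e (Suc m) + real m * e (m-1) = real N * \<mu> * e m" using rec assms by auto
  have N0: "real N > 0" using assms by simp
  have sm: "Suc (m-1) = m" using assms by simp
  have "F (m-1) - F m = (e (m-1) - e (Suc m)) * (e (m-1) + e (Suc m) - 2*\<mu>*e m)"
    unfolding FF_def sm by (simp add: power2_eq_square algebra_simps)
  also have "e (m-1) + e (Suc m) - 2*\<mu>*e m = ((real N - 2*real m)/real N) * (e (m-1) - e (Suc m))"
    using r N0 by (simp add: field_simps)
  finally have "F (m-1) - F m = ((real N - 2*real m)/real N) * ((e (m-1) - e (Suc m)) * (e (m-1) - e (Suc m)))"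
    by (simp add: mult.commute mult.left_commute)
  then show ?thesis by (simp add: power2_eq_square[symmetric] power2_commute)
qed

lemma F_mono1: assumes "1 \<le> m" "2*m \<le> N" shows "F m \<le> F (m-1)"
proof -
  have mN: "m < N" using assms by linarith
  have "real (2*m) \<le> real N" using assms(2) by (simp only: of_nat_le_iff)
  hence "(real N - 2*real m)/real N \<ge> 0" by simp
  hence "0 \<le> ((real N - 2*real m)/real N) * (e (Suc m) - e (m-1))^2" by (intro mult_nonneg_nonneg) auto
  with F_step[OF assms(1) mN] show ?thesis by linarith
qed

lemma F_mono: "i \<le> m \<Longrightarrow> 2*m \<le> N \<Longrightarrow> F m \<le> F i"
proof (induction m)
  case 0 then show ?case by simp
next
  case (Suc m)
  show ?case
  proof (cases "i = Suc m")
    case True then show ?thesis by simp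
  next
    case False
    then have "i \<le> m" using Suc by simp
    then have "F m \<le> F i" using Suc by simp
    moreover have "F (Suc m) \<le> F m" using F_mono1[of "Suc m"] Suc by simp
    ultimately show ?thesis by linarith
  qed
qed

lemma F_contract: assumes "1 \<le> m" "4*(m+1) \<le> N"
  shows "(1 - \<bar>\<mu>\<bar>)/2 * F m \<le> F (m-1) - F (Suc m)"
proof -
  define d1 where "d1 = e (Suc m) - e (m-1)"
  define d2 where "d2 = e (Suc (Suc m)) - e m"
  define u where "u = e (Suc m) - \<mu> * e m"
  define w where "w = \<mu> * e (Suc m) - e m"
  have m1: "m < N" "Suc m < N" using assms by auto
  have s1: "F (m-1) - F m = ((real N - 2*real m)/real N) * d1^2"
    using F_step[OF assms(1) m1(1)] unfolding d1_def by simp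
  have s2: "F m - F (Suc m) = ((real N - 2*real (Suc m))/real N) * d2^2"
    using F_step[of "Suc m"] m1 unfolding d2_def by simp
  have Npos: "real N > 0" using m1 by simp
  have "real (4*(m+1)) \<le> real N" using assms(2) by (simp only: of_nat_le_iff)
  hence N4: "4*real m + 4 \<le> real N" by simp
  have c1: "(real N - 2*real m)/real N \<ge> 1/2" using Npos N4 by (simp add: le_divide_eq)
  have c2: "(real N - 2*real (Suc m))/real N \<ge> 1/2" using Npos N4 by (simp add: le_divide_eq)
  have r1: "(real N - real m) * e (Suc m) + real m * e (m-1) = real N * \<mu> * e m" using rec assms m1 by auto
  have r2: "(real N - real (Suc m)) * e (Suc (Suc m)) + real (Suc m) * e m = real N * \<mu> * e (Suc m)"
    using rec[of "Suc m"] m1 by auto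
  have "real m * d1 = real N * u" unfolding d1_def u_def using r1 by (simp add: algebra_simps)
  hence ud: "u^2 \<le> d1^2" by (rule sq_le_of_scaled) (use assms m1 in auto)
  have "(real N - real (Suc m)) * d2 = real N * w" unfolding d2_def w_def using r2 by (simp add: algebra_simps)
  hence wd: "w^2 \<le> d2^2" by (rule sq_le_of_scaled) (use assms m1 in auto)
  have uwF: "(1 - \<bar>\<mu>\<bar>) * F m \<le> u^2 + w^2"
    using uw_bound[OF mu, of "e m" "e (Suc m)"] unfolding FF_def u_def w_def by simp
  have "(1/2) * d1^2 \<le> ((real N - 2*real m)/real N) * d1^2" by (rule mult_right_mono[OF c1]) simp
  moreover have "(1/2) * d2^2 \<le> ((real N - 2*real (Suc m))/real N) * d2^2" by (rule mult_right_mono[OF c2]) simp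
  ultimately have "F (m-1) - F (Suc m) \<ge> (1/2) * d1^2 + (1/2) * d2^2"
    using s1 s2 by linarith
  then show ?thesis using ud wd uwF by linarith
qed

lemma e_sum: assumes t: "\<bar>\<mu>\<bar> < 1" and L: "2*L \<le> N" and i: "e 1 = \<mu> * e 0"
  shows "(\<Sum>m\<le>L. real (m+1) * (e m)^2) \<le> 1608 * (e 0)^2 / (1 - \<bar>\<mu>\<bar>)^2"
proof -
  define t where "t = \<bar>\<mu>\<bar>"
  have t01: "0 \<le> t" "t < 1" using t unfolding t_def by auto
  define \<delta> where "\<delta> = (1 - t)/2"
  have d: "0 < \<delta>" "\<delta> \<le> 1" unfolding \<delta>_def using t01 by auto
  have MS: "(\<Sum>m\<le>L. real (m+1) * F m) \<le> 201 * F 0 / \<delta>^2"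
  proof (rule main_sum[OF _ _ _ d L])
    show "\<And>m. 0 \<le> F m" using FF_nonneg[OF mu] by blast
    show "\<And>i m. i \<le> m \<Longrightarrow> 2*m \<le> N \<Longrightarrow> F m \<le> F i" by (rule F_mono)
    show "\<And>m. 1 \<le> m \<Longrightarrow> 4*(m+1) \<le> N \<Longrightarrow> \<delta>*F m \<le> F(m-1) - F(Suc m)"
      using F_contract unfolding \<delta>_def t_def by simp
  qed
  have em: "\<And>m. (e m)^2 \<le> F m / (1 - t)"
  proof -
    fix m
    have "(1 - t) * (e m)^2 \<le> (1-t) * ((e m)^2 + (e (Suc m))^2)" using t01 by (intro mult_left_mono) auto
    also have "\<dots> \<le> F m" using FF_lower[OF mu, of e m] unfolding t_def by simp
    finally show "(e m)^2 \<le> F m / (1 - t)" using t01 by (simp add: le_divide_eq mult.commute)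
  qed
  have "(\<Sum>m\<le>L. real (m+1) * (e m)^2) \<le> (\<Sum>m\<le>L. real (m+1) * (F m / (1-t)))"
    by (rule sum_mono) (intro mult_left_mono em, simp)
  also have "\<dots> = (\<Sum>m\<le>L. real (m+1) * F m) / (1-t)" by (simp add: sum_divide_distrib)
  also have "\<dots> \<le> (201 * F 0 / \<delta>^2) / (1-t)" by (rule divide_right_mono[OF MS]) (use t01 in simp)
  also have "F 0 = (e 0)^2 * (1 - \<mu>^2)" unfolding FF_def using i by (simp add: power2_eq_square algebra_simps)
  also have "1 - \<mu>^2 = (1-t)*(1+t)" unfolding t_def by (simp add: power2_eq_square algebra_simps abs_mult_self_eq)
  also have "(201 * ((e 0)^2 * ((1-t)*(1+t))) / \<delta>^2) / (1-t) = 804 * ((e 0)^2 * (1+t)) / (1-t)^2"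
  proof -
    have h: "\<delta>^2 = (1-t)^2/4" unfolding \<delta>_def by (simp add: power_divide)
    have "1 - t > 0" using t01 by simp
    then show ?thesis unfolding h by (rule alg_const)
  qed
  also have "\<dots> \<le> 804 * ((e 0)^2 * 2) / (1-t)^2"
  proof -
    have "(e 0)^2 * (1+t) \<le> (e 0)^2 * 2" using t01 by (intro mult_left_mono) auto
    then have "804 * ((e 0)^2 * (1+t)) \<le> 804 * ((e 0)^2 * 2)" by linarith
    then show ?thesis by (rule divide_right_mono) simp
  qed
  finally have X: "(\<Sum>m\<le>L. real (m+1) * (e m)^2) \<le> 804 * ((e 0)^2 * 2) / (1-t)^2" .
  have Y: "804 * ((e 0)^2 * 2) / (1-t)^2 = 1608 * (e 0)^2 / (1 - \<bar>\<mu>\<bar>)^2" unfolding t_def by simp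
  show ?thesis using X unfolding Y .
qed

lemma e_sum_deg: assumes t: "\<bar>\<mu>\<bar> = 1" and L: "2*L \<le> N" and i: "e 1 = \<mu> * e 0"
  shows "(\<Sum>m\<le>L. real (m+1) * (e m)^2) = (e 0)^2 * (real L + 1) * (real L + 2) / 2"
proof -
  have mu2: "\<mu>*\<mu> = 1" using t abs_mult_self_eq[of \<mu>] by simp
  have "F 0 = (e 0)^2 * (1 - \<mu>*\<mu>)" unfolding FF_def using i by (simp add: power2_eq_square algebra_simps)
  then have F0: "F 0 = 0" using mu2 by simp
  have Fz: "F m = 0" if "2*m \<le> N" for m
    using F_mono[of 0 m] F0 FF_nonneg[OF mu, of e m] that by linarith
  have step: "\<And>m. 2*m \<le> N \<Longrightarrow> (e (Suc m))^2 = (e m)^2"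
  proof -
    fix m assume "2*m \<le> N"
    then have "F m = 0" by (rule Fz)
    moreover have "F m = (e (Suc m) - \<mu> * e m)^2 + (e m)^2 * (1 - \<mu>*\<mu>)" unfolding FF_def
      by (simp add: power2_eq_square algebra_simps)
    ultimately have "e (Suc m) = \<mu> * e m" using mu2 by simp
    then have "(e (Suc m))^2 = (\<mu>*\<mu>) * (e m * e m)" by (simp add: power2_eq_square mult.assoc mult.left_commute)
    then show "(e (Suc m))^2 = (e m)^2" using mu2 by (simp add: power2_eq_square)
  qed
  have all: "\<And>m. m \<le> L \<Longrightarrow> (e m)^2 = (e 0)^2"
  proof -
    fix m show "m \<le> L \<Longrightarrow> (e m)^2 = (e 0)^2"
    proof (induction m)
      case 0 then show ?case by simp
    next
      case (Suc m)
      then have "m \<le> L" "2*m \<le> N" using L by auto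
      then show ?case using step[of m] Suc.IH by simp
    qed
  qed
  have "(\<Sum>m\<le>L. real (m+1) * (e m)^2) = (\<Sum>m\<le>L. real (m+1) * (e 0)^2)"
    by (rule sum.cong[OF refl]) (metis all atMost_iff)
  also have "\<dots> = (e 0)^2 * (\<Sum>m\<le>L. real (m+1))" by (simp add: sum_distrib_left mult.commute)
  also have "\<dots> = (e 0)^2 * ((real L + 1) * (real L + 2) / 2)"
    by (simp only: sum_atMost_real)
  finally show ?thesis by (simp only: mult.assoc times_divide_eq_right)
qed

end

lemma rec_D_alg: fixes n s m x0 x1 x2 x3 x4 :: real
  assumes r1: "(n - m)*x2 + m*x0 = s*x1"
  and r2: "(n - (m+1))*x3 + (m+1)*x1 = s*x2"
  and r3: "(n - (m+2))*x4 + (m+2)*x2 = s*x3"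
  and n: "n \<noteq> 0"
  shows "((n-2) - m)*(x4 - x2) + m*(x2 - x0) = s*(x3 - x1)"
proof -
  have "n * (((n-2) - m)*(x4 - x2) + m*(x2 - x0) - s*(x3 - x1)) = 0"
    using r1 r2 r3 by algebra
  then show ?thesis using n by simp
qed

lemma init_alg: fixes n s x0 x1 x2 x3 :: real
  assumes x0: "x0 = 1" and x1: "x1 = s/n"
  and r1: "(n - 1)*x2 + 1*x0 = s*x1"
  and r2: "(n - 2)*x3 + 2*x1 = s*x2"
  and n: "n \<noteq> 0" "n \<noteq> 1"
  shows "(n-2)*(x3 - x1) = s*(x2 - x0)" and "x2 - x0 = (s^2 - n^2)/(n*(n-1))"
proof -
  have nx1: "n*x1 = s" using x1 n by simp
  have "n * ((n-2)*(x3 - x1) - s*(x2 - x0)) = 0"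
    using r1 r2 nx1 x0 by algebra
  then show "(n-2)*(x3 - x1) = s*(x2 - x0)" using n by simp
  have "(n-1)*x2 = s * s/n - 1" using r1 x0 x1 by (simp add: algebra_simps)
  then have "x2 = (s * s/n - 1)/(n-1)" using n by (simp add: field_simps)
  then show "x2 - x0 = (s^2 - n^2)/(n*(n-1))" using n x0 by (simp add: field_simps power2_eq_square)
qed

lemma e0_core: fixes n a :: real assumes a: "2 \<le> a" "2*a \<le> n"
  shows "(4*a*(n-a)/(n*(n-1)))^2 \<le> 16*((2*a-2)/(n-2))^2"
proof -
  have n: "n \<ge> 4" "n - 2 > 0" "n*(n-1) > 0" using a by auto
  have "a*(n-a)*(n-2) \<le> (a*n)*(n-1)"
    using a n by (intro mult_mono) (auto simp: algebra_simps)
  also have "\<dots> \<le> ((2*a-2)*n)*(n-1)" using a n by (intro mult_right_mono) auto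
  finally have h: "a*(n-a)*(n-2) \<le> (2*a-2)*(n*(n-1))" by (simp add: algebra_simps)
  have "(4*a*(n-a))*(n-2) \<le> (4*(2*a-2))*(n*(n-1))" using h by (simp add: algebra_simps)
  hence "(4*a*(n-a))*(n-2)/(n*(n-1)) \<le> 4*(2*a-2)" using n by (simp add: divide_le_eq)
  hence "(4*a*(n-a))/(n*(n-1))*(n-2) \<le> 4*(2*a-2)" by simp
  hence "4*a*(n-a)/(n*(n-1)) \<le> 4*(2*a-2)/(n-2)" using n by (simp add: le_divide_eq)
  moreover have "0 \<le> 4*a*(n-a)/(n*(n-1))" using a n by simp
  ultimately have "(4*a*(n-a)/(n*(n-1)))^2 \<le> (4*(2*a-2)/(n-2))^2" by (rule power_mono)
  also have "\<dots> = 16*((2*a-2)/(n-2))^2" by (simp add: power2_eq_square power_divide algebra_simps)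
  finally show ?thesis .
qed

lemma e0_bound: fixes n j :: nat assumes "2 \<le> j" "j+2 \<le> n"
  shows "(((real n - 2*real j)^2 - (real n)^2)/(real n*(real n-1)))^2
         \<le> 16*(1 - \<bar>(real n - 2*real j)/(real n - 2)\<bar>)^2"
proof (cases "2*j \<le> n")
  case True
  have a: "2 \<le> real j" "2*real j \<le> real n" using assms True by linarith+
  have n2: "real n - 2 > 0" using a by linarith
  have eq1: "((real n - 2*real j)^2 - (real n)^2)^2 = (4*real j*(real n - real j))^2"
    by (simp add: power2_eq_square algebra_simps)
  have eq2: "1 - \<bar>(real n - 2*real j)/(real n - 2)\<bar> = (2*real j - 2)/(real n - 2)"
    using a n2 by (simp add: field_simps)
  show ?thesis unfolding eq2 power_divide eq1 using e0_core[OF a] by (simp add: power_divide)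
next
  case False
  define a where "a = real n - real j"
  from False have "n < 2*j" by simp
  hence "real n < real (2*j)" by (simp only: of_nat_less_iff)
  hence "real n < 2*real j" by simp
  moreover have "real (j+2) \<le> real n" using assms by (simp only: of_nat_le_iff)
  ultimately have a: "2 \<le> a" "2*a \<le> real n" unfolding a_def by simp_all
  have n2: "real n - 2 > 0" using a by linarith
  have eq1: "((real n - 2*real j)^2 - (real n)^2)^2 = (4*a*(real n - a))^2"
    unfolding a_def by (simp add: power2_eq_square algebra_simps)
  have eq2: "1 - \<bar>(real n - 2*real j)/(real n - 2)\<bar> = (2*a - 2)/(real n - 2)"
    using a n2 unfolding a_def by (simp add: field_simps)
  show ?thesis unfolding eq2 power_divide eq1 using e0_core[OF a] by (simp add: power_divide)
qed

lemma kappa_sum_bound: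
  fixes \<kappa> :: "nat \<Rightarrow> real" and n j L :: nat
  assumes jn: "j \<le> n" and k0: "\<kappa> 0 = 1" and k1: "\<kappa> 1 = (real n - 2*real j)/real n"
  and rec: "\<And>k. 1 \<le> k \<Longrightarrow> k < n \<Longrightarrow>
     (real n - real k)*\<kappa>(Suc k) + real k*\<kappa>(k-1) = (real n - 2*real j)*\<kappa> k"
  and L: "2*L + 2 \<le> n"
  shows "(\<Sum>m\<in>{1..L}. real m * (\<kappa>(Suc m) - \<kappa>(m-1))^2) \<le> 25728"
proof (cases L)
  case 0 then show ?thesis by simp
next
  case (Suc L')
  have n4: "4 \<le> n" using L Suc by simp
  define s where "s = real n - 2*real j"
  define e where "e m = \<kappa> (m+2) - \<kappa> m" for m
  define N where "N = n - 2"
  define \<mu> where "\<mu> = s / (real n - 2)"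
  have rN: "real N = real n - 2" unfolding N_def using n4 by simp
  have Nmu: "real N * \<mu> = s" unfolding \<mu>_def rN using n4 by simp
  have sumeq: "(\<Sum>m\<in>{1..L}. real m * (\<kappa>(Suc m) - \<kappa>(m-1))^2) = (\<Sum>m\<le>L'. real (m+1) * (e m)^2)"
  proof -
    have "(\<Sum>m\<in>{1..L}. real m * (\<kappa>(Suc m) - \<kappa>(m-1))^2) = (\<Sum>k<L. real (Suc k) * (\<kappa>(Suc (Suc k)) - \<kappa> k)^2)"
      using sum.atLeast1_atMost_eq[of "\<lambda>m. real m * (\<kappa>(Suc m) - \<kappa>(m-1))^2" L] by simp
    also have "\<dots> = (\<Sum>m\<le>L'. real (m+1) * (e m)^2)"
      unfolding Suc lessThan_Suc_atMost e_def by (simp add: add.commute)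
    finally show ?thesis .
  qed
  have L2: "2*L' \<le> N" using L Suc unfolding N_def by simp
  have erec: "(real N - real m) * e (Suc m) + real m * e (m-1) = real N * \<mu> * e m"
    if "1 \<le> m" "m < N" for m
  proof -
    have m3: "m+2 < n" using that unfolding N_def by simp
    have r1: "(real n - real m)*\<kappa>(m+1) + real m*\<kappa>(m-1) = s*\<kappa> m"
      using rec[of m] that m3 unfolding s_def by simp
    have r2: "(real n - (real m+1))*\<kappa>(m+2) + (real m+1)*\<kappa> m = s*\<kappa>(m+1)"
      using rec[of "m+1"] m3 unfolding s_def by (simp add: add.commute)
    have r3: "(real n - (real m+2))*\<kappa>(m+3) + (real m+2)*\<kappa> (m+1) = s*\<kappa>(m+2)"
      using rec[of "m+2"] m3 unfolding s_def by (simp add: add.commute eval_nat_numeral)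
    have "((real n-2) - real m)*(\<kappa>(m+3) - \<kappa>(m+1)) + real m*(\<kappa>(m+1) - \<kappa>(m-1)) = s*(\<kappa>(m+2) - \<kappa> m)"
      by (rule rec_D_alg[OF r1 r2 r3]) (use n4 in simp)
    moreover have "e (Suc m) = \<kappa>(m+3) - \<kappa>(m+1)" "e (m-1) = \<kappa>(m+1) - \<kappa>(m-1)" "e m = \<kappa>(m+2) - \<kappa> m"
      unfolding e_def using that by (simp_all add: numeral_3_eq_3)
    ultimately show ?thesis unfolding Nmu unfolding rN by simp
  qed
  have r1': "(real n - 1)*\<kappa> 2 + 1*\<kappa> 0 = s*\<kappa> 1" using rec[of 1] n4 unfolding s_def by (simp add: numeral_2_eq_2)
  have r2': "(real n - 2)*\<kappa> 3 + 2*\<kappa> 1 = s*\<kappa> 2" using rec[of 2] n4 unfolding s_def by (simp add: numeral_3_eq_3)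
  have n0: "real n \<noteq> 0" "real n \<noteq> 1" using n4 by auto
  have k1': "\<kappa> 1 = s / real n" using k1 unfolding s_def .
  note I = init_alg[OF k0 k1' r1' r2' n0]
  have einit: "e 1 = \<mu> * e 0"
  proof -
    have ee: "e 1 = \<kappa> 3 - \<kappa> 1" "e 0 = \<kappa> 2 - \<kappa> 0" unfolding e_def by (simp_all add: eval_nat_numeral)
    have "(real n - 2) * e 1 = s * e 0" using I(1) unfolding ee .
    then show ?thesis unfolding \<mu>_def using n4 by (simp add: field_simps)
  qed
  have e0: "e 0 = (s^2 - (real n)^2)/(real n*(real n-1))" using I(2) unfolding e_def by (simp add: eval_nat_numeral)
  show ?thesis
  proof (cases "j = 0 \<or> j = n")
    case True
    have "s^2 = (real n)^2" using True unfolding s_def by (auto simp: power2_eq_square algebra_simps)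
    hence e00: "e 0 = 0" using e0 by simp
    hence e10: "e 1 = 0" using einit by simp
    have ez: "e m = 0 \<and> e (Suc m) = 0" if "m < N" for m
      using that
    proof (induction m)
      case 0 then show ?case using e00 e10 by simp
    next
      case (Suc m)
      then have h: "e m = 0" "e (Suc m) = 0" by auto
      have "(real N - real (Suc m)) * e (Suc (Suc m)) + real (Suc m) * e m = real N * \<mu> * e (Suc m)"
        using erec[of "Suc m"] Suc.prems by simp
      then have "(real N - real (Suc m)) * e (Suc (Suc m)) = 0" using h by simp
      moreover have "real N - real (Suc m) \<noteq> 0" using Suc.prems by simp
      ultimately show ?case using h by simp
    qed
    have "(\<Sum>m\<le>L'. real (m+1) * (e m)^2) = 0"
    proof (rule sum.neutral, rule ballI)
      fix x assume "x \<in> {..L'}"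
      then have "x < N" using L2 n4 unfolding N_def by auto
      then show "real (x+1) * (e x)^2 = 0" using ez[of x] by simp
    qed
    then show ?thesis using sumeq by simp
  next
    case False
    then have j1: "1 \<le> j" "j < n" using jn by auto
    have mu1: "\<bar>\<mu>\<bar> \<le> 1"
    proof -
      have "\<bar>s\<bar> \<le> real n - 2" unfolding s_def using j1 by (simp add: abs_le_iff)
      then show ?thesis unfolding \<mu>_def using n4 by (simp add: abs_divide divide_le_eq)
    qed
    interpret E: enseq e N \<mu>
      by unfold_locales (use erec mu1 in auto)
    show ?thesis
    proof (cases "j = 1 \<or> j = n - 1")
      case True
      have amu: "\<bar>\<mu>\<bar> = 1"
      proof -
        have "\<bar>s\<bar> = real n - 2" unfolding s_def using True n4 by (auto simp: of_nat_diff)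
        then show ?thesis unfolding \<mu>_def using n4 by (simp add: abs_divide)
      qed
      have "s^2 - (real n)^2 = -4*(real n - 1)" unfolding s_def using True n4
        by (auto simp: power2_eq_square algebra_simps of_nat_diff)
      note sn = this
      have A: "e 0 * (real n * (real n - 1)) = s^2 - (real n)^2" using e0 n0 by simp
      have "(real n * e 0 + 4) * (real n - 1) = 0" using A sn by (simp add: algebra_simps)
      hence "real n * e 0 = -4" using n0 by simp
      hence "e 0 = -4/real n" using n0 by (simp add: field_simps)
      hence e0sq: "(e 0)^2 = 16/(real n)^2" by (simp add: power2_eq_square)
      have "(\<Sum>m\<le>L'. real (m+1) * (e m)^2) = (e 0)^2 * (real L' + 1) * (real L' + 2) / 2"
        by (rule E.e_sum_deg[OF amu L2 einit])
      also have "\<dots> \<le> 16/(real n)^2 * ((real n)^2/2)"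
      proof -
        have "real (2*L + 2) \<le> real n" using L by (simp only: of_nat_le_iff)
        hence "2*real L' + 4 \<le> real n" using Suc by simp
        hence "(real L' + 1) * (real L' + 2) \<le> (real n / 2) * (real n / 2)"
          by (intro mult_mono) auto
        hence H: "(real L' + 1) * (real L' + 2) \<le> (real n)^2/4" by (simp add: power2_eq_square)
        have "0 \<le> (real L' + 1) * (real L' + 2)" by simp
        with H have "(real L' + 1) * (real L' + 2) / 2 \<le> (real n)^2/2" by linarith
        then have M: "16/(real n)^2 * ((real L'+1)*(real L'+2)/2) \<le> 16/(real n)^2 * ((real n)^2/2)"
          by (rule mult_left_mono) simp
        have "(e 0)^2 * (real L' + 1) * (real L' + 2) / 2 = 16/(real n)^2 * ((real L'+1)*(real L'+2)/2)"
          unfolding e0sq using n0 by (simp add: field_simps)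
        then show ?thesis using M by linarith
      qed
      also have "\<dots> = 8" using n0 by (simp add: field_simps)
      finally show ?thesis using sumeq by simp
    next
      case False
      then have j2: "2 \<le> j" "j + 2 \<le> n" using j1 by auto
      have amu: "\<bar>\<mu>\<bar> < 1"
      proof -
        have "\<bar>s\<bar> < real n - 2" unfolding s_def using j2 by (simp add: abs_less_iff)
        then show ?thesis unfolding \<mu>_def using n4 by (simp add: abs_divide divide_less_eq)
      qed
      have "(\<Sum>m\<le>L'. real (m+1) * (e m)^2) \<le> 1608 * (e 0)^2 / (1 - \<bar>\<mu>\<bar>)^2"
        by (rule E.e_sum[OF amu L2 einit])
      also have "\<dots> \<le> 1608 * (16 * (1 - \<bar>\<mu>\<bar>)^2) / (1 - \<bar>\<mu>\<bar>)^2"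
      proof -
        have "(e 0)^2 \<le> 16 * (1 - \<bar>\<mu>\<bar>)^2" using e0_bound[OF j2] unfolding e0 \<mu>_def s_def .
        then show ?thesis by (intro divide_right_mono) auto
      qed
      also have "\<dots> = 25728" using amu by simp
      finally show ?thesis using sumeq by simp
    qed
  qed
qed




definition symd :: "nat set \<Rightarrow> nat set \<Rightarrow> nat set" where "symd x y = (x - y) \<union> (y - x)"
definition chi :: "nat set \<Rightarrow> nat set \<Rightarrow> real" where "chi T x = (-1)^card (T \<inter> x)"
definition Pk :: "nat \<Rightarrow> nat \<Rightarrow> nat set set" where "Pk n k = {A \<in> cube n. card A = k}"
definition kap :: "nat \<Rightarrow> nat set \<Rightarrow> nat \<Rightarrow> real" where
  "kap n T k = (\<Sum>A\<in>Pk n k. chi T A) / real (n choose k)"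

lemma card_symd: assumes "finite X" "finite Y"
  shows "card (symd X Y) + 2*card (X \<inter> Y) = card X + card Y"
proof -
  have d: "(X - Y) \<inter> (Y - X) = {}" by auto
  have "card (symd X Y) = card (X - Y) + card (Y - X)"
    unfolding symd_def using assms d by (simp add: card_Un_disjoint)
  moreover have "card (X - Y) + card (X \<inter> Y) = card X"
  proof -
    have "X = (X - Y) \<union> (X \<inter> Y)" by auto
    then have "card X = card ((X - Y) \<union> (X \<inter> Y))" by simp
    also have "\<dots> = card (X - Y) + card (X \<inter> Y)" using assms by (intro card_Un_disjoint) auto
    finally show ?thesis by simp
  qed
  moreover have "card (Y - X) + card (X \<inter> Y) = card Y"
  proof -
    have "Y = (Y - X) \<union> (X \<inter> Y)" by auto
    then have "card Y = card ((Y - X) \<union> (X \<inter> Y))" by simp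
    also have "\<dots> = card (Y - X) + card (X \<inter> Y)" using assms by (intro card_Un_disjoint) auto
    finally show ?thesis by simp
  qed
  ultimately show ?thesis by simp
qed

lemma neg1_pow_mod2: "(-1::real)^a = (-1)^b" if "a + 2*c = b" for a b c :: nat
proof -
  have "(-1::real)^b = (-1)^a * ((-1)^2)^c" using that by (metis power_add power_mult)
  then show ?thesis by simp
qed

lemma chi_symd: assumes "finite x" "finite A"
  shows "chi T (symd x A) = chi T x * chi T A"
proof -
  have e: "T \<inter> symd x A = symd (T \<inter> x) (T \<inter> A)" unfolding symd_def by auto
  have "card (symd (T \<inter> x) (T \<inter> A)) + 2*card ((T \<inter> x) \<inter> (T \<inter> A)) = card (T \<inter> x) + card (T \<inter> A)"
    using assms by (intro card_symd) auto
  then have "(-1::real)^card (symd (T \<inter> x) (T \<inter> A)) = (-1)^(card (T \<inter> x) + card (T \<inter> A))"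
    by (rule neg1_pow_mod2)
  then show ?thesis unfolding chi_def e by (simp add: power_add)
qed

lemma chi_comm: "chi T x = chi x T" unfolding chi_def by (simp add: Int_commute)

lemma symd_invol: "symd x (symd x A) = A" unfolding symd_def by auto
lemma symd_invol2: "symd (symd x A) A = x" unfolding symd_def by auto
lemma symd_sub: "x \<subseteq> U \<Longrightarrow> A \<subseteq> U \<Longrightarrow> symd x A \<subseteq> U" unfolding symd_def by auto
lemma hamming_symd: "hamming x (symd x A) = card A"
  unfolding hamming_def using symd_invol[of x A] unfolding symd_def by simp
lemma hamming_eq: "hamming x y = card (symd x y)" unfolding hamming_def symd_def by simp

lemma sph_mean_eq: assumes x: "x \<in> cube n"
  shows "sph_mean n k f x = (\<Sum>A\<in>Pk n k. f (symd x A)) / real (n choose k)"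
proof -
  have "(\<Sum>y\<in>{y\<in>cube n. hamming x y = k}. f y) = (\<Sum>A\<in>Pk n k. f (symd x A))"
  proof (rule sum.reindex_bij_witness[where i="symd x" and j="symd x"])
    fix A assume "A \<in> Pk n k"
    then show "symd x A \<in> {y \<in> cube n. hamming x y = k}" "symd x (symd x A) = A"
      using x unfolding Pk_def cube_def by (auto simp: symd_invol hamming_symd symd_sub)
  next
    fix y assume "y \<in> {y \<in> cube n. hamming x y = k}"
    then show "symd x y \<in> Pk n k" "symd x (symd x y) = y" "f (symd x (symd x y)) = f y"
      using x unfolding Pk_def cube_def by (auto simp: symd_invol hamming_eq symd_sub)
  qed
  then show ?thesis unfolding sph_mean_def by simp
qed

lemma finite_cube: "finite (cube n)" unfolding cube_def by simp
lemma finite_Pk: "finite (Pk n k)" unfolding Pk_def using finite_cube by simp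
lemma cube_finite_el: "x \<in> cube n \<Longrightarrow> finite x" unfolding cube_def by (auto intro: finite_subset)

lemma sph_mean_chi: assumes x: "x \<in> cube n"
  shows "sph_mean n k (chi T) x = chi T x * kap n T k"
proof -
  have "(\<Sum>A\<in>Pk n k. chi T (symd x A)) = chi T x * (\<Sum>A\<in>Pk n k. chi T A)"
    unfolding sum_distrib_left
    by (rule sum.cong) (use x in \<open>auto simp: Pk_def chi_symd cube_finite_el\<close>)
  then show ?thesis unfolding sph_mean_eq[OF x] kap_def by simp
qed

lemma sph_mean_sum: assumes x: "x \<in> cube n" and S: "finite S"
  shows "sph_mean n k (\<lambda>y. \<Sum>T\<in>S. a T * chi T y) x = (\<Sum>T\<in>S. a T * chi T x * kap n T k)"
proof -
  have "sph_mean n k (\<lambda>y. \<Sum>T\<in>S. a T * chi T y) x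
      = (\<Sum>A\<in>Pk n k. \<Sum>T\<in>S. a T * chi T (symd x A)) / real (n choose k)"
    unfolding sph_mean_eq[OF x] ..
  also have "\<dots> = (\<Sum>T\<in>S. a T * ((\<Sum>A\<in>Pk n k. chi T (symd x A)) / real (n choose k)))"
    by (subst sum.swap) (simp add: sum_divide_distrib sum_distrib_left)
  also have "\<dots> = (\<Sum>T\<in>S. a T * chi T x * kap n T k)"
    using sph_mean_chi[OF x] unfolding sph_mean_eq[OF x] by (simp add: mult.assoc)
  finally show ?thesis .
qed

lemma card_cube: "card (cube n) = 2^n" unfolding cube_def by (simp add: card_Pow)

lemma sum_chi: assumes V: "V \<subseteq> {..<n}"
  shows "(\<Sum>x\<in>cube n. chi V x) = (if V = {} then 2^n else 0)"
proof (cases "V = {}")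
  case True
  then show ?thesis unfolding chi_def by (simp add: card_cube)
next
  case False
  then obtain v where v: "v \<in> V" by auto
  have vn: "{v} \<subseteq> {..<n}" using v V by auto
  have cv: "chi V {v} = -1" unfolding chi_def using v by simp
  have "(\<Sum>x\<in>cube n. chi V x) = (\<Sum>x\<in>cube n. chi V (symd x {v}))"
    by (rule sum.reindex_bij_witness[where i="\<lambda>x. symd x {v}" and j="\<lambda>x. symd x {v}"])
       (use vn in \<open>auto simp: symd_invol2 cube_def symd_sub\<close>)
  also have "\<dots> = (\<Sum>x\<in>cube n. - chi V x)"
    by (rule sum.cong) (auto simp: chi_symd cube_finite_el cv)
  also have "\<dots> = - (\<Sum>x\<in>cube n. chi V x)" by (simp add: sum_negf)
  finally have "(\<Sum>x\<in>cube n. chi V x) = 0" by simp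
  then show ?thesis using False by simp
qed

lemma symd_empty_iff: "symd T U = {} \<longleftrightarrow> T = U" unfolding symd_def by auto

lemma chi_prod: assumes "finite T" "finite U"
  shows "chi T x * chi U x = chi (symd T U) x"
  using chi_symd[OF assms, of x] chi_comm by metis

lemma ortho: assumes T: "T \<in> cube n" and U: "U \<in> cube n"
  shows "(\<Sum>x\<in>cube n. chi T x * chi U x) = (if T = U then 2^n else 0)"
proof -
  have fT: "finite T" "finite U" using T U by (auto intro: cube_finite_el)
  have "(\<Sum>x\<in>cube n. chi T x * chi U x) = (\<Sum>x\<in>cube n. chi (symd T U) x)"
    by (simp add: chi_prod[OF fT])
  also have "\<dots> = (if symd T U = {} then 2^n else 0)"
    by (rule sum_chi) (use T U in \<open>auto simp: cube_def symd_def\<close>)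
  finally show ?thesis by (simp add: symd_empty_iff)
qed

lemma ortho_dual: assumes x: "x \<in> cube n" and y: "y \<in> cube n"
  shows "(\<Sum>T\<in>cube n. chi T x * chi T y) = (if x = y then 2^n else 0)"
  using ortho[OF x y] by (simp add: chi_comm)

lemma inversion: assumes x: "x \<in> cube n"
  shows "(\<Sum>T\<in>cube n. (\<Sum>y\<in>cube n. f y * chi T y) * chi T x) = 2^n * f x"
proof -
  have "(\<Sum>T\<in>cube n. (\<Sum>y\<in>cube n. f y * chi T y) * chi T x)
      = (\<Sum>y\<in>cube n. f y * (\<Sum>T\<in>cube n. chi T x * chi T y))"
  proof -
    have "(\<Sum>T\<in>cube n. (\<Sum>y\<in>cube n. f y * chi T y) * chi T x)
       = (\<Sum>T\<in>cube n. \<Sum>y\<in>cube n. f y * (chi T x * chi T y))"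
      by (simp add: sum_distrib_right sum_distrib_left mult_ac)
    also have "\<dots> = (\<Sum>y\<in>cube n. \<Sum>T\<in>cube n. f y * (chi T x * chi T y))" by (rule sum.swap)
    finally show ?thesis by (simp add: sum_distrib_left)
  qed
  also have "\<dots> = (\<Sum>y\<in>cube n. if y = x then f y * 2^n else 0)"
    by (rule sum.cong) (use x in \<open>auto simp: ortho_dual\<close>)
  also have "\<dots> = 2^n * f x" using x finite_cube by (simp add: sum.delta')
  finally show ?thesis .
qed

lemma parseval: "(\<Sum>x\<in>cube n. (\<Sum>T\<in>cube n. a T * chi T x)^2) = 2^n * (\<Sum>T\<in>cube n. (a T)^2)"
proof -
  have "(\<Sum>x\<in>cube n. (\<Sum>T\<in>cube n. a T * chi T x)^2)
     = (\<Sum>x\<in>cube n. \<Sum>T\<in>cube n. \<Sum>U\<in>cube n. a T * a U * (chi T x * chi U x))"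
    by (simp add: power2_eq_square sum_product mult_ac)
  also have "\<dots> = (\<Sum>T\<in>cube n. \<Sum>U\<in>cube n. a T * a U * (\<Sum>x\<in>cube n. chi T x * chi U x))"
  proof -
    have "(\<Sum>x\<in>cube n. \<Sum>T\<in>cube n. \<Sum>U\<in>cube n. a T * a U * (chi T x * chi U x))
        = (\<Sum>T\<in>cube n. \<Sum>x\<in>cube n. \<Sum>U\<in>cube n. a T * a U * (chi T x * chi U x))"
      by (rule sum.swap)
    also have "\<dots> = (\<Sum>T\<in>cube n. \<Sum>U\<in>cube n. \<Sum>x\<in>cube n. a T * a U * (chi T x * chi U x))"
      by (rule sum.cong[OF refl], rule sum.swap)
    finally show ?thesis by (simp add: sum_distrib_left)
  qed
  also have "\<dots> = (\<Sum>T\<in>cube n. \<Sum>U\<in>cube n. if U = T then a T * a T * 2^n else 0)"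
    by (rule sum.cong[OF refl], rule sum.cong[OF refl]) (auto simp: ortho)
  also have "\<dots> = (\<Sum>T\<in>cube n. a T * a T * 2^n)"
    using finite_cube by (simp add: sum.delta')
  also have "\<dots> = 2^n * (\<Sum>T\<in>cube n. (a T)^2)"
    by (simp add: sum_distrib_left power2_eq_square mult_ac)
  finally show ?thesis .
qed

lemma sum_chi_single: assumes T: "T \<subseteq> {..<n}"
  shows "(\<Sum>i<n. chi T {i}) = real n - 2*real (card T)"
proof -
  have c: "\<And>i. chi T {i} = 1 - 2*(if i \<in> T then 1 else 0)" unfolding chi_def by auto
  have "(\<Sum>i<n. (if i \<in> T then 1 else 0::real)) = real (card ({..<n} \<inter> T))"
    by (simp add: sum.If_cases)
  also have "{..<n} \<inter> T = T" using T by auto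
  finally have h: "(\<Sum>i<n. (if i \<in> T then 1 else 0::real)) = real (card T)" .
  have "(\<Sum>i<n. chi T {i}) = (\<Sum>i<n. 1 - 2*(if i \<in> T then 1 else 0::real))" using c by simp
  also have "\<dots> = real n - 2 * (\<Sum>i<n. (if i \<in> T then 1 else 0::real))"
    by (simp add: sum_subtractf sum_distrib_left)
  finally show ?thesis using h by simp
qed

lemma double_count: fixes G :: "nat set \<Rightarrow> nat set \<Rightarrow> real"
  shows "(\<Sum>A\<in>Pk n k. \<Sum>i\<in>{..<n}-A. G A (insert i A)) = (\<Sum>B\<in>Pk n (Suc k). \<Sum>i\<in>B. G (B - {i}) B)"
proof -
  have fin1: "\<forall>A\<in>Pk n k. finite ({..<n}-A)" by simp
  have fin2: "\<forall>B\<in>Pk n (Suc k). finite B" unfolding Pk_def using cube_finite_el by auto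
  have "(\<Sum>A\<in>Pk n k. \<Sum>i\<in>{..<n}-A. G A (insert i A)) = (\<Sum>(A,i)\<in>Sigma (Pk n k) (\<lambda>A. {..<n}-A). G A (insert i A))"
    by (rule sum.Sigma[OF finite_Pk fin1])
  also have "\<dots> = (\<Sum>(B,i)\<in>Sigma (Pk n (Suc k)) (\<lambda>B. B). G (B - {i}) B)"
  proof (rule sum.reindex_bij_witness[where i="\<lambda>(B,i). (B - {i}, i)" and j="\<lambda>(A,i). (insert i A, i)"])
    fix a assume a: "a \<in> Sigma (Pk n k) (\<lambda>A. {..<n}-A)"
    obtain A i where ai: "a = (A,i)" by fastforce
    have A: "A \<subseteq> {..<n}" "card A = k" "i < n" "i \<notin> A" using a ai unfolding Pk_def cube_def by auto
    have fA: "finite A" using A(1) finite_subset by blast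
    show "(case (case a of (A, i) \<Rightarrow> (insert i A, i)) of (B, i) \<Rightarrow> (B - {i}, i)) = a"
      using ai A by auto
    show "(case a of (A, i) \<Rightarrow> (insert i A, i)) \<in> Sigma (Pk n (Suc k)) (\<lambda>B. B)"
      using ai A fA unfolding Pk_def cube_def by auto
    show "(case (case a of (A, i) \<Rightarrow> (insert i A, i)) of (B, i) \<Rightarrow> G (B - {i}) B) = (case a of (A, i) \<Rightarrow> G A (insert i A))"
      using ai A by auto
  next
    fix b assume b: "b \<in> Sigma (Pk n (Suc k)) (\<lambda>B. B)"
    obtain B i where bi: "b = (B,i)" by fastforce
    have B: "B \<subseteq> {..<n}" "card B = Suc k" "i \<in> B" using b bi unfolding Pk_def cube_def by auto
    have fB: "finite B" using B(1) finite_subset by blast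
    show "(case (case b of (B, i) \<Rightarrow> (B - {i}, i)) of (A, i) \<Rightarrow> (insert i A, i)) = b"
      using bi B by (auto simp: insert_absorb)
    show "(case b of (B, i) \<Rightarrow> (B - {i}, i)) \<in> Sigma (Pk n k) (\<lambda>A. {..<n}-A)"
      using bi B fB unfolding Pk_def cube_def by auto
  qed
  also have "\<dots> = (\<Sum>B\<in>Pk n (Suc k). \<Sum>i\<in>B. G (B - {i}) B)"
    by (rule sum.Sigma[OF finite_Pk fin2, symmetric])
  finally show ?thesis .
qed

definition sig :: "nat \<Rightarrow> nat set \<Rightarrow> nat \<Rightarrow> real" where
  "sig n T k = (\<Sum>A\<in>Pk n k. chi T A)"

lemma symd_single: "symd A {i} = (if i \<in> A then A - {i} else insert i A)"
  unfolding symd_def by auto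

lemma sig_rec: assumes T: "T \<subseteq> {..<n}"
  shows "real (Suc k) * sig n T (Suc k) + (if k = 0 then 0 else (real n - real k + 1) * sig n T (k-1))
         = (real n - 2*real (card T)) * sig n T k"
proof -
  define U where "U = {..<n}"
  have "(\<Sum>A\<in>Pk n k. \<Sum>i<n. chi T (symd A {i})) = (\<Sum>A\<in>Pk n k. chi T A * (\<Sum>i<n. chi T {i}))"
    by (rule sum.cong[OF refl]) (auto simp: Pk_def sum_distrib_left chi_symd cube_finite_el)
  also have "\<dots> = (real n - 2*real (card T)) * sig n T k"
    unfolding sum_chi_single[OF T] sig_def by (simp add: sum_distrib_right mult.commute)
  finally have L1: "(\<Sum>A\<in>Pk n k. \<Sum>i<n. chi T (symd A {i})) = (real n - 2*real (card T)) * sig n T k" .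
  have split: "(\<Sum>i<n. chi T (symd A {i})) = (\<Sum>i\<in>U-A. chi T (insert i A)) + (\<Sum>i\<in>A. chi T (A - {i}))"
    if A: "A \<in> Pk n k" for A
  proof -
    have AU: "A \<subseteq> U" using A unfolding Pk_def cube_def U_def by auto
    have fA: "finite A" using AU unfolding U_def by (auto intro: finite_subset)
    have "{..<n} = (U - A) \<union> A" using AU unfolding U_def by auto
    then have "(\<Sum>i<n. chi T (symd A {i})) = (\<Sum>i\<in>(U-A) \<union> A. chi T (symd A {i}))" by simp
    also have "\<dots> = (\<Sum>i\<in>U-A. chi T (symd A {i})) + (\<Sum>i\<in>A. chi T (symd A {i}))"
      by (rule sum.union_disjoint) (use fA in \<open>auto simp: U_def\<close>)
    also have "(\<Sum>i\<in>U-A. chi T (symd A {i})) = (\<Sum>i\<in>U-A. chi T (insert i A))"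
      by (rule sum.cong) (auto simp: symd_single)
    also have "(\<Sum>i\<in>A. chi T (symd A {i})) = (\<Sum>i\<in>A. chi T (A - {i}))"
      by (rule sum.cong) (auto simp: symd_single)
    finally show ?thesis .
  qed
  have P1: "(\<Sum>A\<in>Pk n k. \<Sum>i\<in>U-A. chi T (insert i A)) = real (Suc k) * sig n T (Suc k)"
  proof -
    have "(\<Sum>A\<in>Pk n k. \<Sum>i\<in>U-A. chi T (insert i A)) = (\<Sum>B\<in>Pk n (Suc k). \<Sum>i\<in>B. chi T B)"
      using double_count[where n=n and k=k and G="\<lambda>A B. chi T B"] unfolding U_def .
    also have "\<dots> = (\<Sum>B\<in>Pk n (Suc k). real (Suc k) * chi T B)"
      by (rule sum.cong) (auto simp: Pk_def)
    finally show ?thesis unfolding sig_def by (simp add: sum_distrib_left)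
  qed
  have P2: "(\<Sum>A\<in>Pk n k. \<Sum>i\<in>A. chi T (A - {i})) = (if k = 0 then 0 else (real n - real k + 1) * sig n T (k-1))"
  proof (cases k)
    case 0
    have "Pk n 0 = {{}}" unfolding Pk_def cube_def
      by (auto intro: finite_subset simp: card_eq_0_iff)
    then show ?thesis using 0 by simp
  next
    case (Suc k')
    have "(\<Sum>A\<in>Pk n k. \<Sum>i\<in>A. chi T (A - {i})) = (\<Sum>A\<in>Pk n k'. \<Sum>i\<in>U-A. chi T A)"
      using double_count[where n=n and k=k' and G="\<lambda>A B. chi T A"] unfolding U_def Suc by simp
    also have "\<dots> = (\<Sum>A\<in>Pk n k'. (real n - real k') * chi T A)"
    proof (rule sum.cong[OF refl])
      fix A assume A: "A \<in> Pk n k'"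
      have AU: "A \<subseteq> U" using A unfolding Pk_def cube_def U_def by auto
      have "card (U - A) = n - k'" using A AU unfolding Pk_def U_def
        by (simp add: card_Diff_subset finite_subset)
      moreover have "k' \<le> n" using A unfolding Pk_def cube_def
        by (metis (mono_tags, lifting) Pow_iff card_lessThan card_mono finite_lessThan mem_Collect_eq)
      ultimately show "(\<Sum>i\<in>U-A. chi T A) = (real n - real k') * chi T A" by simp
    qed
    finally show ?thesis unfolding sig_def using Suc by (simp add: sum_distrib_left)
  qed
  have "(\<Sum>A\<in>Pk n k. \<Sum>i<n. chi T (symd A {i}))
      = (\<Sum>A\<in>Pk n k. \<Sum>i\<in>U-A. chi T (insert i A)) + (\<Sum>A\<in>Pk n k. \<Sum>i\<in>A. chi T (A - {i}))"
    by (simp add: split sum.distrib)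
  then show ?thesis using L1 P1 P2 by simp
qed

lemma binom_B1: "Suc k * (n choose Suc k) = (n - k) * (n choose k)"
proof (cases n)
  case 0 then show ?thesis by simp
next
  case (Suc n')
  have "Suc k * (n choose Suc k) = n * (n' choose k)" using Suc Suc_times_binomial by simp
  moreover have "(n - k) * (n choose k) = n * (n - 1 choose k)" by (rule binomial_absorb_comp)
  ultimately show ?thesis using Suc by simp
qed

lemma binom_real: assumes "k \<le> n"
  shows "real (Suc k) * real (n choose Suc k) = (real n - real k) * real (n choose k)"
proof -
  have "real (Suc k * (n choose Suc k)) = real ((n - k) * (n choose k))" using binom_B1 by metis
  then show ?thesis using assms by (simp add: of_nat_diff algebra_simps)
qed

lemma kap_sig: "kap n T k = sig n T k / real (n choose k)" unfolding kap_def sig_def ..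

lemma Pk0: "Pk n 0 = {{}}" unfolding Pk_def cube_def
  by (auto intro: finite_subset simp: card_eq_0_iff)

lemma kap0: "kap n T 0 = 1"
  unfolding kap_def Pk0 chi_def by simp

lemma kap1: assumes T: "T \<subseteq> {..<n}" and n: "1 \<le> n"
  shows "kap n T 1 = (real n - 2*real (card T)) / real n"
proof -
  have "real (Suc 0) * sig n T (Suc 0) = (real n - 2*real (card T)) * sig n T 0"
    using sig_rec[OF T, of 0] by simp
  moreover have "sig n T 0 = 1" unfolding sig_def Pk0 chi_def by simp
  ultimately have "sig n T 1 = real n - 2*real (card T)" by simp
  then show ?thesis unfolding kap_sig by simp
qed

lemma kap_rec: assumes T: "T \<subseteq> {..<n}" and k: "1 \<le> k" "k < n"
  shows "(real n - real k) * kap n T (Suc k) + real k * kap n T (k-1) = (real n - 2*real (card T)) * kap n T k"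
proof -
  define c where "c j = real (n choose j)" for j
  have cpos: "c k > 0" unfolding c_def using k by simp
  have cpos1: "c (k-1) > 0" "c (Suc k) > 0" unfolding c_def using k by auto
  have b1: "real (Suc k) * c (Suc k) = (real n - real k) * c k" unfolding c_def using binom_real[of k n] k by simp
  have b2: "(real n - real k + 1) * c (k-1) = real k * c k"
  proof -
    have "real (Suc (k-1)) * c (Suc (k-1)) = (real n - real (k-1)) * c (k-1)"
      unfolding c_def using binom_real[of "k-1" n] k by simp
    then show ?thesis using k by (simp add: of_nat_diff algebra_simps)
  qed
  have sr: "real (Suc k) * sig n T (Suc k) + (real n - real k + 1) * sig n T (k-1) = (real n - 2*real (card T)) * sig n T k"
    using sig_rec[OF T, of k] k by simp
  have sg: "sig n T j = c j * kap n T j" if "c j > 0" for j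
    unfolding kap_sig c_def using that unfolding c_def by simp
  have e1: "real (Suc k) * sig n T (Suc k) = c k * ((real n - real k) * kap n T (Suc k))"
  proof -
    have "real (Suc k) * sig n T (Suc k) = (real (Suc k) * c (Suc k)) * kap n T (Suc k)"
      unfolding sg[OF cpos1(2)] by (simp add: mult.assoc)
    also have "\<dots> = ((real n - real k) * c k) * kap n T (Suc k)" unfolding b1 ..
    finally show ?thesis by (simp add: mult_ac)
  qed
  have e2: "(real n - real k + 1) * sig n T (k-1) = c k * (real k * kap n T (k-1))"
  proof -
    have "(real n - real k + 1) * sig n T (k-1) = ((real n - real k + 1) * c (k-1)) * kap n T (k-1)"
      unfolding sg[OF cpos1(1)] by (simp add: mult.assoc)
    also have "\<dots> = (real k * c k) * kap n T (k-1)" unfolding b2 ..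
    finally show ?thesis by (simp add: mult_ac)
  qed
  have e3: "(real n - 2*real (card T)) * sig n T k = c k * ((real n - 2*real (card T)) * kap n T k)"
    unfolding sg[OF cpos] by (simp add: mult_ac)
  have "c k * ((real n - real k) * kap n T (Suc k) + real k * kap n T (k-1)) = c k * ((real n - 2*real (card T)) * kap n T k)"
    using sr unfolding e1 e2 e3 by (simp add: distrib_left)
  then show ?thesis using cpos by simp
qed




lemma sph_mean_cong: "(\<And>y. y \<in> cube n \<Longrightarrow> f y = g y) \<Longrightarrow> sph_mean n k f x = sph_mean n k g x"
  unfolding sph_mean_def by (intro arg_cong2[where f="(/)"] sum.cong) auto

definition coef :: "nat \<Rightarrow> (nat set \<Rightarrow> real) \<Rightarrow> nat set \<Rightarrow> real" where
  "coef n f T = (\<Sum>y\<in>cube n. f y * chi T y) / 2^n"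

lemma expand: assumes x: "x \<in> cube n"
  shows "f x = (\<Sum>T\<in>cube n. coef n f T * chi T x)"
proof -
  have "(\<Sum>T\<in>cube n. coef n f T * chi T x) = (\<Sum>T\<in>cube n. (\<Sum>y\<in>cube n. f y * chi T y) * chi T x) / 2^n"
    unfolding coef_def times_divide_eq_left by (rule sum_divide_distrib[symmetric])
  also have "\<dots> = f x" using inversion[OF x, of f] by simp
  finally show ?thesis by simp
qed

lemma diff_expand: assumes x: "x \<in> cube n"
  shows "sph_mean n p f x - sph_mean n q f x = (\<Sum>T\<in>cube n. (coef n f T * (kap n T p - kap n T q)) * chi T x)"
proof -
  have sm1: "\<And>k. sph_mean n k f x = sph_mean n k (\<lambda>y. \<Sum>T\<in>cube n. coef n f T * chi T y) x"
    by (rule sph_mean_cong) (rule expand)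
  have sm: "\<And>k. sph_mean n k f x = (\<Sum>T\<in>cube n. coef n f T * chi T x * kap n T k)"
    unfolding sm1 by (rule sph_mean_sum[OF x finite_cube])
  have "sph_mean n p f x - sph_mean n q f x
      = (\<Sum>T\<in>cube n. coef n f T * chi T x * kap n T p - coef n f T * chi T x * kap n T q)"
    unfolding sm sum_subtractf ..
  also have "\<dots> = (\<Sum>T\<in>cube n. (coef n f T * (kap n T p - kap n T q)) * chi T x)"
    by (rule sum.cong[OF refl]) (simp add: algebra_simps)
  finally show ?thesis .
qed

lemma l2_diff: "(\<Sum>x\<in>cube n. (sph_mean n p f x - sph_mean n q f x)^2)
   = 2^n * (\<Sum>T\<in>cube n. (coef n f T)^2 * (kap n T p - kap n T q)^2)"
proof -
  have "(\<Sum>x\<in>cube n. (sph_mean n p f x - sph_mean n q f x)^2)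
      = (\<Sum>x\<in>cube n. (\<Sum>T\<in>cube n. (coef n f T * (kap n T p - kap n T q)) * chi T x)^2)"
  proof (rule sum.cong[OF refl])
    fix x assume x: "x \<in> cube n"
    show "(sph_mean n p f x - sph_mean n q f x)^2 = (\<Sum>T\<in>cube n. (coef n f T * (kap n T p - kap n T q)) * chi T x)^2"
      by (simp only: diff_expand[OF x])
  qed
  also have "\<dots> = 2^n * (\<Sum>T\<in>cube n. (coef n f T * (kap n T p - kap n T q))^2)" by (rule parseval)
  finally show ?thesis by (simp add: power_mult_distrib)
qed

lemma l2_f: "(\<Sum>x\<in>cube n. (f x)^2) = 2^n * (\<Sum>T\<in>cube n. (coef n f T)^2)"
proof -
  have "(\<Sum>x\<in>cube n. (f x)^2) = (\<Sum>x\<in>cube n. (\<Sum>T\<in>cube n. coef n f T * chi T x)^2)"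
  proof (rule sum.cong[OF refl])
    fix x assume x: "x \<in> cube n"
    show "(f x)^2 = (\<Sum>T\<in>cube n. coef n f T * chi T x)^2" by (simp only: expand[OF x, symmetric])
  qed
  also have "\<dots> = 2^n * (\<Sum>T\<in>cube n. (coef n f T)^2)" by (rule parseval)
  finally show ?thesis .
qed

lemma sq_fun_bound:
  fixes K :: "nat set" and p q :: "nat \<Rightarrow> nat" and C0 :: real
  assumes K: "finite K"
  and B: "\<And>T. T \<in> cube n \<Longrightarrow> (\<Sum>k\<in>K. real k * (kap n T (p k) - kap n T (q k))^2) \<le> C0"
  shows "(\<Sum>x\<in>cube n. (1/2) * (\<Sum>k\<in>K. real k * (sph_mean n (p k) f x - sph_mean n (q k) f x)^2))
         \<le> (C0/2) * (\<Sum>x\<in>cube n. (f x)^2)"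
proof -
  have "(\<Sum>x\<in>cube n. (1/2) * (\<Sum>k\<in>K. real k * (sph_mean n (p k) f x - sph_mean n (q k) f x)^2))
     = (1/2) * (\<Sum>k\<in>K. real k * (\<Sum>x\<in>cube n. (sph_mean n (p k) f x - sph_mean n (q k) f x)^2))"
  proof -
    have "(\<Sum>x\<in>cube n. (1/2) * (\<Sum>k\<in>K. real k * (sph_mean n (p k) f x - sph_mean n (q k) f x)^2))
       = (1/2) * (\<Sum>x\<in>cube n. \<Sum>k\<in>K. real k * (sph_mean n (p k) f x - sph_mean n (q k) f x)^2)"
      by (simp add: sum_distrib_left)
    also have "(\<Sum>x\<in>cube n. \<Sum>k\<in>K. real k * (sph_mean n (p k) f x - sph_mean n (q k) f x)^2)
       = (\<Sum>k\<in>K. \<Sum>x\<in>cube n. real k * (sph_mean n (p k) f x - sph_mean n (q k) f x)^2)"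
      by (rule sum.swap)
    finally show ?thesis by (simp add: sum_distrib_left)
  qed
  also have "\<dots> = (1/2) * (\<Sum>k\<in>K. real k * (2^n * (\<Sum>T\<in>cube n. (coef n f T)^2 * (kap n T (p k) - kap n T (q k))^2)))"
    by (simp only: l2_diff)
  also have "\<dots> = (1/2) * 2^n * (\<Sum>T\<in>cube n. (coef n f T)^2 * (\<Sum>k\<in>K. real k * (kap n T (p k) - kap n T (q k))^2))"
  proof -
    have "(\<Sum>k\<in>K. real k * (2^n * (\<Sum>T\<in>cube n. (coef n f T)^2 * (kap n T (p k) - kap n T (q k))^2)))
       = 2^n * (\<Sum>k\<in>K. \<Sum>T\<in>cube n. real k * ((coef n f T)^2 * (kap n T (p k) - kap n T (q k))^2))"
      by (simp add: sum_distrib_left mult_ac)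
    also have "(\<Sum>k\<in>K. \<Sum>T\<in>cube n. real k * ((coef n f T)^2 * (kap n T (p k) - kap n T (q k))^2))
       = (\<Sum>T\<in>cube n. \<Sum>k\<in>K. real k * ((coef n f T)^2 * (kap n T (p k) - kap n T (q k))^2))"
      by (rule sum.swap)
    also have "\<dots> = (\<Sum>T\<in>cube n. (coef n f T)^2 * (\<Sum>k\<in>K. real k * (kap n T (p k) - kap n T (q k))^2))"
      by (simp add: sum_distrib_left mult_ac)
    finally show ?thesis by simp
  qed
  also have "\<dots> \<le> (1/2) * 2^n * (\<Sum>T\<in>cube n. (coef n f T)^2 * C0)"
    by (intro mult_left_mono sum_mono) (auto simp: B)
  also have "\<dots> = (C0/2) * (\<Sum>x\<in>cube n. (f x)^2)"
    unfolding l2_f[of f n] by (simp add: sum_distrib_right sum_distrib_left mult_ac)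
  finally show ?thesis .
qed

lemma reindex_odd: fixes g :: "nat \<Rightarrow> real" assumes g: "\<And>m. 0 \<le> g m"
  shows "(\<Sum>k\<in>{1..r}. real k * g (2*k-1)) \<le> (\<Sum>m\<in>{1..2*r-1}. real m * g m)"
proof -
  have "(\<Sum>k\<in>{1..r}. real k * g (2*k-1)) \<le> (\<Sum>k\<in>{1..r}. real (2*k-1) * g (2*k-1))"
  proof (rule sum_mono)
    fix k assume "k \<in> {1..r}"
    then have "real k \<le> real (2*k-1)" by simp
    then show "real k * g (2*k-1) \<le> real (2*k-1) * g (2*k-1)" using g by (rule mult_right_mono)
  qed
  also have "\<dots> = (\<Sum>m\<in>(\<lambda>k. 2*k-1) ` {1..r}. real m * g m)"
    by (rule sum.reindex[symmetric, unfolded comp_def]) (auto simp: inj_on_def)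
  also have "\<dots> \<le> (\<Sum>m\<in>{1..2*r-1}. real m * g m)"
    by (rule sum_mono2) (auto simp: g)
  finally show ?thesis .
qed

lemma reindex_even: fixes g :: "nat \<Rightarrow> real" assumes g: "\<And>m. 0 \<le> g m"
  shows "(\<Sum>k\<in>{1..r}. real k * g (2*k)) \<le> (\<Sum>m\<in>{1..2*r}. real m * g m)"
proof -
  have "(\<Sum>k\<in>{1..r}. real k * g (2*k)) \<le> (\<Sum>k\<in>{1..r}. real (2*k) * g (2*k))"
  proof (rule sum_mono)
    fix k assume "k \<in> {1..r}"
    then have "real k \<le> real (2*k)" by simp
    then show "real k * g (2*k) \<le> real (2*k) * g (2*k)" using g by (rule mult_right_mono)
  qed
  also have "\<dots> = (\<Sum>m\<in>(\<lambda>k. 2*k) ` {1..r}. real m * g m)"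
    by (rule sum.reindex[symmetric, unfolded comp_def]) (auto simp: inj_on_def)
  also have "\<dots> \<le> (\<Sum>m\<in>{1..2*r}. real m * g m)"
    by (rule sum_mono2) (auto simp: g)
  finally show ?thesis .
qed

lemma kap_bound: assumes T: "T \<in> cube n" and n: "1 \<le> n" and L: "2*L + 2 \<le> n"
  shows "(\<Sum>m\<in>{1..L}. real m * (kap n T (Suc m) - kap n T (m-1))^2) \<le> 25728"
proof (rule kappa_sum_bound[where j="card T"])
  have TU: "T \<subseteq> {..<n}" using T unfolding cube_def by simp
  show "card T \<le> n" using card_mono[OF _ TU] by simp
  show "kap n T 0 = 1" by (rule kap0)
  show "kap n T 1 = (real n - 2*real (card T)) / real n" by (rule kap1[OF TU n])
  show "\<And>k. 1 \<le> k \<Longrightarrow> k < n \<Longrightarrow> (real n - real k) * kap n T (Suc k) + real k * kap n T (k - 1) =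
          (real n - 2 * real (card T)) * kap n T k" by (rule kap_rec[OF TU])
  show "2*L + 2 \<le> n" by (rule L)
qed

lemma R0_T: assumes T: "T \<in> cube n" and n: "1 \<le> n"
  shows "(\<Sum>k\<in>{1..(n div 2) div 2}. real k * (kap n T (2*k) - kap n T (2*(k-1)))^2) \<le> 25728"
proof (cases "(n div 2) div 2 = 0")
  case True then show ?thesis by simp
next
  case False
  define r where "r = (n div 2) div 2"
  define g where "g m = (kap n T (Suc m) - kap n T (m-1))^2" for m
  have "(\<Sum>k\<in>{1..r}. real k * (kap n T (2*k) - kap n T (2*(k-1)))^2) = (\<Sum>k\<in>{1..r}. real k * g (2*k-1))"
    unfolding g_def by (rule sum.cong[OF refl]) (auto simp: Suc_diff_1 numeral_2_eq_2)
  also have "\<dots> \<le> (\<Sum>m\<in>{1..2*r-1}. real m * g m)" by (rule reindex_odd) (simp add: g_def)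
  also have "\<dots> \<le> 25728" unfolding g_def
    by (rule kap_bound[OF T n]) (use False in \<open>simp add: r_def; linarith\<close>)
  finally show ?thesis unfolding r_def .
qed

lemma R1_T: assumes T: "T \<in> cube n" and n: "1 \<le> n"
  shows "(\<Sum>k\<in>{1..(n div 2 - 1) div 2}. real k * (kap n T (2*k+1) - kap n T (2*k-1))^2) \<le> 25728"
proof (cases "(n div 2 - 1) div 2 = 0")
  case True then show ?thesis by simp
next
  case False
  define r where "r = (n div 2 - 1) div 2"
  define g where "g m = (kap n T (Suc m) - kap n T (m-1))^2" for m
  have "(\<Sum>k\<in>{1..r}. real k * (kap n T (2*k+1) - kap n T (2*k-1))^2) = (\<Sum>k\<in>{1..r}. real k * g (2*k))"
    unfolding g_def by (rule sum.cong[OF refl]) auto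
  also have "\<dots> \<le> (\<Sum>m\<in>{1..2*r}. real m * g m)" by (rule reindex_even) (simp add: g_def)
  also have "\<dots> \<le> 25728" unfolding g_def
    by (rule kap_bound[OF T n]) (use False in \<open>simp add: r_def; linarith\<close>)
  finally show ?thesis unfolding r_def .
qed

lemma sqrt_bound: assumes "0 \<le> S" and "X \<le> 12864 * S"
  shows "sqrt X \<le> 200 * sqrt S"
proof -
  have "sqrt X \<le> sqrt (40000 * S)" using assms by (intro real_sqrt_le_mono) linarith
  also have "\<dots> = sqrt 40000 * sqrt S" by (rule real_sqrt_mult)
  also have "sqrt 40000 = (200::real)" by (rule real_sqrt_unique) auto
  finally show ?thesis .
qed

theorem lemma3:
  shows "\<exists>C::real. \<forall>n\<ge>1. \<forall>f :: nat set \<Rightarrow> real.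
           l2norm n (R0 n f) \<le> C * l2norm n f \<and> l2norm n (R1 n f) \<le> C * l2norm n f"
proof (intro exI[of _ 200] allI impI conjI)
  fix n :: nat and f :: "nat set \<Rightarrow> real"
  assume n: "1 \<le> n"
  have S0: "0 \<le> (\<Sum>x\<in>cube n. (f x)^2)" by (simp add: sum_nonneg)
  have "(\<Sum>x\<in>cube n. (R0 n f x)^2) = (\<Sum>x\<in>cube n. (1/2) * (\<Sum>k\<in>{1..(n div 2) div 2}. real k * (sph_mean n (2*k) f x - sph_mean n (2*(k-1)) f x)^2))"
    unfolding R0_def by (intro sum.cong refl real_sqrt_pow2) (simp add: sum_nonneg)
  also have "\<dots> \<le> (25728/2) * (\<Sum>x\<in>cube n. (f x)^2)"
    by (rule sq_fun_bound[where p="\<lambda>k. 2*k" and q="\<lambda>k. 2*(k-1)"]) (use R0_T n in auto)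
  finally have "(\<Sum>x\<in>cube n. (R0 n f x)^2) \<le> 12864 * (\<Sum>x\<in>cube n. (f x)^2)" by simp
  then show "l2norm n (R0 n f) \<le> 200 * l2norm n f"
    unfolding l2norm_def by (rule sqrt_bound[OF S0])
  have "(\<Sum>x\<in>cube n. (R1 n f x)^2) = (\<Sum>x\<in>cube n. (1/2) * (\<Sum>k\<in>{1..(n div 2 - 1) div 2}. real k * (sph_mean n (2*k+1) f x - sph_mean n (2*k-1) f x)^2))"
    unfolding R1_def by (intro sum.cong refl real_sqrt_pow2) (simp add: sum_nonneg)
  also have "\<dots> \<le> (25728/2) * (\<Sum>x\<in>cube n. (f x)^2)"
    by (rule sq_fun_bound[where p="\<lambda>k. 2*k+1" and q="\<lambda>k. 2*k-1"]) (use R1_T n in auto)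
  finally have "(\<Sum>x\<in>cube n. (R1 n f x)^2) \<le> 12864 * (\<Sum>x\<in>cube n. (f x)^2)" by simp
  then show "l2norm n (R1 n f) \<le> 200 * l2norm n f"
    unfolding l2norm_def by (rule sqrt_bound[OF S0])
qed


end
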